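(* Let $E, F$ be Banach lattices with $F$ having the property (d), and let $S, T: E \to F$ be operators with $0 \le S \le T$. If $T$ is almost Grothendieck, then $S$ is almost Grothendieck.
   Context: $F$ has the property (d) if $|y_n'| \to 0$ weak* in $F'$ for every disjoint weak* null sequence $(y_n')$ in $F'$. A bounded operator $T: E \to F$ is almost Grothendieck if $T'y_n' \to 0$ weakly in $E'$ for every disjoint weak* null sequence $(y_n') \subset F'$. *)

theory Defs
  imports "HOL-Analysis.Analysis"
begin

class banach_lattice = banach + ordered_real_vector + lattice +
  assumes lattice_norm: "sup x (- x) \<le> sup y (- y) \<Longrightarrow> norm x \<le> norm y"

definition lmod :: "'a::banach_lattice \<Rightarrow> 'a" where
  "lmod x = sup x (- x)"

text \<open>Lattice operations of the (order) dual, via the Riesz--Kantorovich formulas.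
  The modulus of a functional f, first on the positive cone, then extended linearly.\<close>
definition dual_abs_pos :: "('a::banach_lattice \<Rightarrow>\<^sub>L real) \<Rightarrow> 'a \<Rightarrow> real" where
  "dual_abs_pos f x = Sup {\<bar>f y\<bar> | y. lmod y \<le> x}"

definition dual_abs :: "('a::banach_lattice \<Rightarrow>\<^sub>L real) \<Rightarrow> 'a \<Rightarrow> real" where
  "dual_abs f x = dual_abs_pos f (sup x 0) - dual_abs_pos f (sup (- x) 0)"

definition dual_inf_pos :: "('a::banach_lattice \<Rightarrow> real) \<Rightarrow> ('a \<Rightarrow> real) \<Rightarrow> 'a \<Rightarrow> real" where
  "dual_inf_pos f g x = Inf {f y + g (x - y) | y. 0 \<le> y \<and> y \<le> x}"

definition dual_disjoint :: "('a::banach_lattice \<Rightarrow>\<^sub>L real) \<Rightarrow> ('a \<Rightarrow>\<^sub>L real) \<Rightarrow> bool" where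
  "dual_disjoint f g \<longleftrightarrow> (\<forall>x. 0 \<le> x \<longrightarrow> dual_inf_pos (dual_abs f) (dual_abs g) x = 0)"

definition disjoint_seq :: "(nat \<Rightarrow> ('a::banach_lattice \<Rightarrow>\<^sub>L real)) \<Rightarrow> bool" where
  "disjoint_seq y \<longleftrightarrow> (\<forall>n m. n \<noteq> m \<longrightarrow> dual_disjoint (y n) (y m))"

definition weak_star_null :: "(nat \<Rightarrow> ('a::real_normed_vector \<Rightarrow>\<^sub>L real)) \<Rightarrow> bool" where
  "weak_star_null y \<longleftrightarrow> (\<forall>x. (\<lambda>n. blinfun_apply (y n) x) \<longlonglongrightarrow> 0)"

definition weakly_null :: "(nat \<Rightarrow> 'a::real_normed_vector) \<Rightarrow> bool" where
  "weakly_null y \<longleftrightarrow> (\<forall>\<phi> :: 'a \<Rightarrow>\<^sub>L real. (\<lambda>n. blinfun_apply \<phi> (y n)) \<longlonglongrightarrow> 0)"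

definition property_d :: "'a::banach_lattice itself \<Rightarrow> bool" where
  "property_d _ \<longleftrightarrow> (\<forall>y :: nat \<Rightarrow> ('a \<Rightarrow>\<^sub>L real).
      disjoint_seq y \<and> weak_star_null y \<longrightarrow> (\<forall>x. (\<lambda>n. dual_abs (y n) x) \<longlonglongrightarrow> 0))"

definition almost_grothendieck :: "('a::banach_lattice \<Rightarrow>\<^sub>L 'b::banach_lattice) \<Rightarrow> bool" where
  "almost_grothendieck T \<longleftrightarrow> (\<forall>y :: nat \<Rightarrow> ('b \<Rightarrow>\<^sub>L real).
      disjoint_seq y \<and> weak_star_null y \<longrightarrow> weakly_null (\<lambda>n. y n o\<^sub>L T))"

definition positive_op :: "('a::banach_lattice \<Rightarrow>\<^sub>L 'b::banach_lattice) \<Rightarrow> bool" where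
  "positive_op T \<longleftrightarrow> (\<forall>x. 0 \<le> x \<longrightarrow> 0 \<le> T x)"

end

theory Submission imports Defs "HOL-Library.Lattice_Algebras" begin


subclass (in banach_lattice) lattice_ab_group_add ..

lemma pp_minus: "sup x 0 - x = sup (-x) (0::'a::banach_lattice)"
proof -
  have "sup x 0 - x = sup (x + -x) (0 + -x)"
    by (simp only: diff_conv_add_uminus add_sup_distrib_right)
  then show ?thesis by (simp add: sup_commute)
qed

lemma xpn: "x = sup x 0 - sup (-x) (0::'a::banach_lattice)"
proof -
  have "sup x 0 - sup (-x) 0 = sup x 0 - (sup x 0 - x)" by (simp only: pp_minus)
  then show ?thesis by simp
qed

lemma lmod_nonneg: "0 \<le> lmod (x::'a::banach_lattice)"
proof -
  have "x + -x \<le> lmod x + lmod x" unfolding lmod_def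
    by (intro add_mono) auto
  then show ?thesis by simp
qed

lemma lmod_split: "lmod x = sup x 0 + sup (-x) (0::'a::banach_lattice)"
proof -
  have "sup x 0 + sup (-x) 0 = sup (x + sup (-x) 0) (0 + sup (-x) 0)"
    by (simp only: add_sup_distrib_right)
  also have "x + sup (-x) 0 = sup 0 x"
    by (simp add: add_sup_distrib_left)
  finally have "sup x 0 + sup (-x) 0 = sup (sup x (-x)) 0"
    by (simp add: sup_commute sup_left_commute sup_assoc)
  also have "\<dots> = lmod x" using lmod_nonneg[of x] unfolding lmod_def
    by (simp add: sup_absorb1)
  finally show ?thesis by simp
qed

lemma lmod_le_iff: "lmod y \<le> x \<longleftrightarrow> y \<le> x \<and> -y \<le> (x::'a::banach_lattice)"
  unfolding lmod_def by simp

lemma lmod_pos: "0 \<le> x \<Longrightarrow> lmod x = (x::'a::banach_lattice)"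
  unfolding lmod_def by (rule sup_absorb1) (meson neg_le_0_iff_le order_trans)

lemma lmod_lmod: "lmod (lmod (x::'a::banach_lattice)) = lmod x"
  by (simp add: lmod_pos lmod_nonneg)

lemma norm_lmod: "norm (lmod (x::'a::banach_lattice)) = norm x"
  by (metis antisym lattice_norm lmod_def lmod_lmod order_refl)

lemma norm_le_lmod: "lmod y \<le> lmod (x::'a::banach_lattice) \<Longrightarrow> norm y \<le> norm x"
  unfolding lmod_def by (rule lattice_norm)

lemma norm_le_pos: "lmod y \<le> x \<Longrightarrow> 0 \<le> (x::'a::banach_lattice) \<Longrightarrow> norm y \<le> norm x"
  using norm_le_lmod lmod_pos by metis

lemma lmod_minus: "lmod (- (x::'a::banach_lattice)) = lmod x"
  unfolding lmod_def by (simp add: sup_commute)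

lemma lmod_triangle: "lmod (a + b) \<le> lmod a + lmod (b::'a::banach_lattice)"
proof -
  have "a + b \<le> lmod a + lmod b" by (intro add_mono) (auto simp: lmod_def)
  moreover have "-a + -b \<le> lmod a + lmod b" by (intro add_mono) (auto simp: lmod_def)
  ultimately show ?thesis unfolding lmod_le_iff by (simp add: algebra_simps)
qed

lemma lmod_diff_pos: "0 \<le> p \<Longrightarrow> 0 \<le> q \<Longrightarrow> lmod (p - q) \<le> p + (q::'a::banach_lattice)"
  unfolding lmod_le_iff
  by (auto intro: add_increasing2 add_increasing order_trans[OF _ add_increasing[of q p p]]
       simp: algebra_simps)

lemma riesz_pos:
  fixes u a b :: "'a::banach_lattice"
  assumes "0 \<le> u" "u \<le> a + b" "0 \<le> a" "0 \<le> b"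
  shows "\<exists>u1 u2. u = u1 + u2 \<and> 0 \<le> u1 \<and> u1 \<le> a \<and> 0 \<le> u2 \<and> u2 \<le> b"
proof (intro exI conjI)
  show "u = inf u a + (u - inf u a)" by (metis add.commute diff_add_cancel)
  show "0 \<le> inf u a" using assms by simp
  show "inf u a \<le> a" by simp
  have "inf u a \<le> u" by simp
  then show "0 \<le> u - inf u a" by (simp only: diff_ge_0_iff_ge)
  have "u \<le> inf (u + b) (a + b)" using assms by (simp add: add_increasing2)
  also have "\<dots> = inf u a + b" by (simp add: add_inf_distrib_right)
  finally show "u - inf u a \<le> b" by (simp only: diff_le_eq add.commute)
qed

lemma riesz_lmod:
  fixes y x1 x2 :: "'a::banach_lattice"
  assumes "lmod y \<le> x1 + x2" "0 \<le> x1" "0 \<le> x2"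
  shows "\<exists>y1 y2. y = y1 + y2 \<and> lmod y1 \<le> x1 \<and> lmod y2 \<le> x2"
proof -
  define p where "p = sup y 0"
  define q where "q = sup (-y) 0"
  have p0: "0 \<le> p" and q0: "0 \<le> q" unfolding p_def q_def by auto
  have yd: "y = p - q" unfolding p_def q_def by (rule xpn)
  have lm: "lmod y = p + q" unfolding p_def q_def by (rule lmod_split)
  obtain w1 w2 where w: "p + q = w1 + w2" "0 \<le> w1" "w1 \<le> x1" "0 \<le> w2" "w2 \<le> x2"
    using riesz_pos[of "p+q" x1 x2] assms p0 q0 lm by auto
  have "p \<le> w1 + w2" using w(1) q0 by (metis le_add_same_cancel1)
  then obtain p1 p2 where pp: "p = p1 + p2" "0 \<le> p1" "p1 \<le> w1" "0 \<le> p2" "p2 \<le> w2"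
    using riesz_pos[of p w1 w2] p0 w by auto
  show ?thesis
  proof (intro exI conjI)
    have "(p1 - (w1 - p1)) + (p2 - (w2 - p2)) = (p1 + p2) + (p1 + p2) - (w1 + w2)"
      by (simp add: algebra_simps)
    also have "\<dots> = p + p - (p + q)" using pp(1) w(1) by simp
    also have "\<dots> = y" using yd by simp
    finally show "y = (p1 - (w1 - p1)) + (p2 - (w2 - p2))" by simp
    have "lmod (p1 - (w1 - p1)) \<le> p1 + (w1 - p1)"
      by (rule lmod_diff_pos) (use pp in auto)
    then show "lmod (p1 - (w1 - p1)) \<le> x1" using w by simp
    have "lmod (p2 - (w2 - p2)) \<le> p2 + (w2 - p2)"
      by (rule lmod_diff_pos) (use pp in auto)
    then show "lmod (p2 - (w2 - p2)) \<le> x2" using w by simp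
  qed
qed

lemma scale_sup: "0 \<le> c \<Longrightarrow> sup (c *\<^sub>R x) (c *\<^sub>R y) = c *\<^sub>R sup x (y::'a::banach_lattice)"
proof (cases "c = 0")
  case False
  assume c: "0 \<le> c"
  then have cp: "0 < c" using False by simp
  show ?thesis
  proof (rule antisym)
    show "sup (c *\<^sub>R x) (c *\<^sub>R y) \<le> c *\<^sub>R sup x y"
      using c by (auto intro: scaleR_left_mono)
    have "sup x y \<le> inverse c *\<^sub>R sup (c *\<^sub>R x) (c *\<^sub>R y)"
    proof -
      have "inverse c *\<^sub>R (c *\<^sub>R x) \<le> inverse c *\<^sub>R sup (c *\<^sub>R x) (c *\<^sub>R y)"
        using cp by (intro scaleR_left_mono) auto
      moreover have "inverse c *\<^sub>R (c *\<^sub>R y) \<le> inverse c *\<^sub>R sup (c *\<^sub>R x) (c *\<^sub>R y)"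
        using cp by (intro scaleR_left_mono) auto
      ultimately show ?thesis using cp by simp
    qed
    then have "c *\<^sub>R sup x y \<le> c *\<^sub>R (inverse c *\<^sub>R sup (c *\<^sub>R x) (c *\<^sub>R y))"
      using c by (intro scaleR_left_mono) auto
    then show "c *\<^sub>R sup x y \<le> sup (c *\<^sub>R x) (c *\<^sub>R y)" using cp by simp
  qed
qed simp

lemma lmod_scale: "lmod (c *\<^sub>R x) = \<bar>c\<bar> *\<^sub>R lmod (x::'a::banach_lattice)"
proof (cases "0 \<le> c")
  case True
  then show ?thesis unfolding lmod_def using scale_sup[OF True, of x "-x"] by simp
next
  case False
  then have "lmod (c *\<^sub>R x) = lmod ((-c) *\<^sub>R (-x))" by simp
  also have "\<dots> = (-c) *\<^sub>R lmod (-x)" unfolding lmod_def using scale_sup[of "-c" "-x" "x"] False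
    by simp
  finally show ?thesis using False by (simp add: lmod_minus)
qed



lemma sup_add_gen:
  fixes \<phi> :: "'v::real_vector \<Rightarrow> real"
  assumes lin: "\<And>a b. \<phi> (a + b) = \<phi> a + \<phi> b"
    and ne: "A \<noteq> {}" "B \<noteq> {}" and bd: "bdd_above (\<phi>`A)" "bdd_above (\<phi>`B)"
  shows "Sup (\<phi> ` {a+b|a b. a\<in>A \<and> b\<in>B}) = Sup (\<phi>`A) + Sup (\<phi>`B)"
proof -
  let ?S = "{a+b|a b. a\<in>A \<and> b\<in>B}"
  have neS: "?S \<noteq> {}" using ne by blast
  have ub: "\<phi> s \<le> Sup (\<phi>`A) + Sup (\<phi>`B)" if "s \<in> ?S" for s
  proof -
    from that obtain a b where "s = a + b" "a \<in> A" "b \<in> B" by blast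
    then show ?thesis using lin cSup_upper[OF imageI bd(1)] cSup_upper[OF imageI bd(2)]
      by (simp add: add_mono)
  qed
  then have bdS: "bdd_above (\<phi>`?S)" by (auto intro!: bdd_aboveI)
  show ?thesis
  proof (rule antisym)
    show "Sup (\<phi> ` ?S) \<le> Sup (\<phi>`A) + Sup (\<phi>`B)"
      using neS ub by (auto intro!: cSup_least)
    have "Sup (\<phi>`A) \<le> Sup (\<phi> ` ?S) - Sup (\<phi>`B)"
    proof (rule cSup_least)
      show "\<phi>`A \<noteq> {}" using ne by auto
      fix t assume "t \<in> \<phi>`A"
      then obtain a where a: "a \<in> A" "t = \<phi> a" by auto
      have "Sup (\<phi>`B) \<le> Sup (\<phi> ` ?S) - \<phi> a"
      proof (rule cSup_least)
        show "\<phi>`B \<noteq> {}" using ne by auto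
        fix r assume "r \<in> \<phi>`B"
        then obtain b where b: "b \<in> B" "r = \<phi> b" by auto
        have "\<phi> (a + b) \<le> Sup (\<phi> ` ?S)"
          using a b by (intro cSup_upper[OF _ bdS]) blast
        then show "r \<le> Sup (\<phi> ` ?S) - \<phi> a" using lin b by simp
      qed
      then show "t \<le> Sup (\<phi> ` ?S) - Sup (\<phi>`B)" using a by simp
    qed
    then show "Sup (\<phi>`A) + Sup (\<phi>`B) \<le> Sup (\<phi> ` ?S)" by simp
  qed
qed

lemma sup_scale_gen:
  fixes \<phi> :: "'v::real_vector \<Rightarrow> real"
  assumes lin: "\<And>a. \<phi> (c *\<^sub>R a) = c * \<phi> a" and c: "0 < c"
    and ne: "A \<noteq> {}" and bd: "bdd_above (\<phi>`A)"
  shows "Sup (\<phi> ` (scaleR c ` A)) = c * Sup (\<phi>`A)"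
proof -
  have img: "\<phi> ` (scaleR c ` A) = (\<lambda>t. c * t) ` (\<phi>`A)"
    using lin by (auto simp: image_image)
  have ub: "c * t \<le> c * Sup (\<phi>`A)" if "t \<in> \<phi>`A" for t
    using cSup_upper[OF that bd] c by simp
  then have bd2: "bdd_above ((\<lambda>t. c * t) ` (\<phi>`A))" by (auto intro!: bdd_aboveI)
  show ?thesis unfolding img
  proof (rule antisym)
    show "Sup ((\<lambda>t. c * t) ` (\<phi>`A)) \<le> c * Sup (\<phi>`A)"
      using ne ub by (auto intro!: cSup_least)
    have "Sup (\<phi>`A) \<le> Sup ((\<lambda>t. c * t) ` (\<phi>`A)) / c"
    proof (rule cSup_least)
      show "\<phi>`A \<noteq> {}" using ne by auto
      fix t assume t: "t \<in> \<phi>`A"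
      have "c * t \<le> Sup ((\<lambda>t. c * t) ` (\<phi>`A))"
        using t by (intro cSup_upper[OF _ bd2]) auto
      then show "t \<le> Sup ((\<lambda>t. c * t) ` (\<phi>`A)) / c" using c by (simp add: field_simps)
    qed
    then show "c * Sup (\<phi>`A) \<le> Sup ((\<lambda>t. c * t) ` (\<phi>`A))" using c by (simp add: field_simps)
  qed
qed

lemma ext_welldef:
  fixes m :: "'v::real_vector \<Rightarrow> real"
  assumes add: "\<And>a b. a\<in>C \<Longrightarrow> b\<in>C \<Longrightarrow> m (a+b) = m a + m b"
    and Cadd: "\<And>a b. a\<in>C \<Longrightarrow> b\<in>C \<Longrightarrow> a+b \<in> C"
    and mem: "a \<in> C" "b \<in> C" "a' \<in> C" "b' \<in> C" and eq: "a - b = a' - b'"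
  shows "m a - m b = m a' - m b'"
proof -
  have "a + b' = a' + b" using eq by (simp add: algebra_simps)
  then have "m (a + b') = m (a' + b)" by simp
  then show ?thesis using add mem by simp
qed

lemma ext_linear:
  fixes m :: "'v::real_vector \<Rightarrow> real" and p :: "'v \<Rightarrow> 'v"
  assumes add: "\<And>a b. a\<in>C \<Longrightarrow> b\<in>C \<Longrightarrow> m (a+b) = m a + m b"
    and hom: "\<And>c a. a \<in> C \<Longrightarrow> 0 \<le> c \<Longrightarrow> m (c *\<^sub>R a) = c * m a"
    and Cadd: "\<And>a b. a\<in>C \<Longrightarrow> b\<in>C \<Longrightarrow> a+b \<in> C"
    and Cscale: "\<And>c a. a \<in> C \<Longrightarrow> 0 \<le> c \<Longrightarrow> c *\<^sub>R a \<in> C"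
    and p: "\<And>v. p v \<in> C" "\<And>v. p v - v \<in> C"
  shows "linear (\<lambda>v. m (p v) - m (p v - v))"
proof -
  have wd: "m (p v) - m (p v - v) = m a - m b" if "a \<in> C" "b \<in> C" "v = a - b" for v a b
    by (rule ext_welldef[OF add Cadd]) (use that p in auto)
  show ?thesis
  proof (rule linearI)
    fix u v
    have "m (p (u + v)) - m (p (u + v) - (u + v))
        = m (p u + p v) - m ((p u - u) + (p v - v))"
    proof (rule wd)
      show "p u + p v \<in> C" by (intro Cadd p)
      show "(p u - u) + (p v - v) \<in> C" by (intro Cadd p)
    qed (simp add: algebra_simps)
    also have "\<dots> = (m (p u) - m (p u - u)) + (m (p v) - m (p v - v))"
      using add p by simp
    finally show "m (p (u + v)) - m (p (u + v) - (u + v)) =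
        (m (p u) - m (p u - u)) + (m (p v) - m (p v - v))" .
  next
    fix c :: real and v
    show "m (p (c *\<^sub>R v)) - m (p (c *\<^sub>R v) - c *\<^sub>R v) = c *\<^sub>R (m (p v) - m (p v - v))"
    proof (cases "0 \<le> c")
      case True
      have "m (p (c *\<^sub>R v)) - m (p (c *\<^sub>R v) - c *\<^sub>R v) = m (c *\<^sub>R p v) - m (c *\<^sub>R (p v - v))"
      proof (rule wd)
        show "c *\<^sub>R p v \<in> C" by (intro Cscale p True)
        show "c *\<^sub>R (p v - v) \<in> C" by (intro Cscale p True)
      qed (simp add: algebra_simps)
      also have "\<dots> = c *\<^sub>R (m (p v) - m (p v - v))"
        using hom[OF p(1) True, of v] hom[OF p(2) True, of v] by (simp add: right_diff_distrib)
      finally show ?thesis .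
    next
      case False
      have "m (p (c *\<^sub>R v)) - m (p (c *\<^sub>R v) - c *\<^sub>R v) = m ((-c) *\<^sub>R (p v - v)) - m ((-c) *\<^sub>R p v)"
      proof (rule wd)
        show "(-c) *\<^sub>R (p v - v) \<in> C" using False by (intro Cscale p) auto
        show "(-c) *\<^sub>R p v \<in> C" using False by (intro Cscale p) auto
      qed (simp add: algebra_simps)
      also have "\<dots> = c *\<^sub>R (m (p v) - m (p v - v))"
        using hom[OF p(1), of "-c" v] hom[OF p(2), of "-c" v] False by (simp add: algebra_simps)
      finally show ?thesis .
    qed
  qed
qed



definition ivl :: "'a::banach_lattice \<Rightarrow> 'a set" where "ivl x = {y. lmod y \<le> x}"

definition mp :: "('a::banach_lattice \<Rightarrow>\<^sub>L real) \<Rightarrow> 'a \<Rightarrow> real" where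
  "mp f x = Sup (blinfun_apply f ` ivl x)"

lemma lmod_zero[simp]: "lmod (0::'a::banach_lattice) = 0"
  unfolding lmod_def by simp

lemma ivl_zero_mem: "0 \<le> x \<Longrightarrow> 0 \<in> ivl x"
  unfolding ivl_def by simp

lemma ivl_self: "0 \<le> x \<Longrightarrow> x \<in> ivl x"
  unfolding ivl_def by (simp add: lmod_pos)

lemma ivl_minus: "y \<in> ivl x \<Longrightarrow> -y \<in> ivl x"
  unfolding ivl_def by (simp add: lmod_minus)

lemma ivl_le: "y \<in> ivl x \<Longrightarrow> y \<le> x" "y \<in> ivl x \<Longrightarrow> -y \<le> x"
  unfolding ivl_def lmod_le_iff by auto

lemma ivl_norm: "y \<in> ivl x \<Longrightarrow> 0 \<le> x \<Longrightarrow> norm y \<le> norm x"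
  unfolding ivl_def by (auto intro: norm_le_pos)

lemma f_le_norm: "y \<in> ivl x \<Longrightarrow> 0 \<le> x \<Longrightarrow> blinfun_apply f y \<le> norm f * norm x"
proof -
  assume a: "y \<in> ivl x" "0 \<le> x"
  have "blinfun_apply f y \<le> norm (blinfun_apply f y)" by simp
  also have "\<dots> \<le> norm f * norm y" by (rule norm_blinfun)
  also have "\<dots> \<le> norm f * norm x" using ivl_norm[OF a] by (rule mult_left_mono) simp
  finally show ?thesis .
qed

lemma ivl_bdd: fixes f :: "'a::banach_lattice \<Rightarrow>\<^sub>L real" assumes x: "0 \<le> x" shows "bdd_above (blinfun_apply f ` ivl x)"
proof (rule bdd_aboveI2)
  fix y assume "y \<in> ivl x"
  then show "blinfun_apply f y \<le> norm f * norm x" using f_le_norm x by blast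
qed

lemma ivl_ne: "0 \<le> x \<Longrightarrow> ivl x \<noteq> {}"
  using ivl_zero_mem by auto

lemma mp_ge: "y \<in> ivl x \<Longrightarrow> 0 \<le> x \<Longrightarrow> blinfun_apply f y \<le> mp f x"
  unfolding mp_def by (rule cSup_upper) (auto intro: ivl_bdd)

lemma mp_least:
  assumes x: "0 \<le> x" and H: "\<And>y. y \<in> ivl x \<Longrightarrow> blinfun_apply f y \<le> B"
  shows "mp f x \<le> B"
  unfolding mp_def
proof (rule cSup_least)
  show "blinfun_apply f ` ivl x \<noteq> {}" using ivl_ne[OF x] by simp
  fix t assume "t \<in> blinfun_apply f ` ivl x"
  then show "t \<le> B" using H by blast
qed

lemma mp_nonneg: "0 \<le> x \<Longrightarrow> 0 \<le> mp f x"
  using mp_ge[OF ivl_zero_mem, of x f] by simp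

lemma mp_le_norm: "0 \<le> x \<Longrightarrow> mp f x \<le> norm f * norm x"
  by (rule mp_least) (auto intro: f_le_norm)

lemma dual_abs_pos_eq: "0 \<le> x \<Longrightarrow> dual_abs_pos f x = mp f x"
proof -
  assume x: "0 \<le> x"
  let ?S = "{\<bar>blinfun_apply f y\<bar> | y. lmod y \<le> x}"
  have bdS: "bdd_above ?S"
  proof (rule bdd_aboveI)
    fix t assume "t \<in> ?S"
    then obtain y where y: "t = \<bar>blinfun_apply f y\<bar>" "y \<in> ivl x" unfolding ivl_def by auto
    have "\<bar>blinfun_apply f y\<bar> \<le> norm f * norm y" using norm_blinfun[of f y] by simp
    also have "\<dots> \<le> norm f * norm x" using ivl_norm[OF y(2) x] by (simp add: mult_left_mono)
    finally show "t \<le> norm f * norm x" using y by simp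
  qed
  have "lmod (0::'a) \<le> x" using x by simp
  then have neS: "?S \<noteq> {}" by blast
  show ?thesis unfolding dual_abs_pos_def
  proof (rule antisym)
    show "Sup ?S \<le> mp f x"
    proof (rule cSup_least[OF neS])
      fix t assume "t \<in> ?S"
      then obtain y where y: "t = \<bar>blinfun_apply f y\<bar>" "y \<in> ivl x" unfolding ivl_def by auto
      have "blinfun_apply f y \<le> mp f x" "blinfun_apply f (-y) \<le> mp f x"
        using mp_ge[OF y(2) x] mp_ge[OF ivl_minus[OF y(2)] x] by auto
      then show "t \<le> mp f x" using y by (simp add: blinfun.minus_right)
    qed
    show "mp f x \<le> Sup ?S"
    proof (rule mp_least[OF x])
      fix y assume y: "y \<in> ivl x"
      have "\<bar>blinfun_apply f y\<bar> \<le> Sup ?S"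
        using y by (intro cSup_upper[OF _ bdS]) (auto simp: ivl_def)
      then show "blinfun_apply f y \<le> Sup ?S" by simp
    qed
  qed
qed

lemma ivl_add: "0 \<le> x1 \<Longrightarrow> 0 \<le> x2 \<Longrightarrow> ivl (x1 + x2) = {a+b|a b. a \<in> ivl x1 \<and> b \<in> ivl x2}"
proof (intro equalityI subsetI)
  fix y assume a: "0 \<le> x1" "0 \<le> x2" "y \<in> ivl (x1 + x2)"
  then have "lmod y \<le> x1 + x2" unfolding ivl_def by simp
  then obtain y1 y2 where "y = y1 + y2" "lmod y1 \<le> x1" "lmod y2 \<le> x2"
    using riesz_lmod[of y x1 x2] a(1,2) by blast
  then show "y \<in> {a+b|a b. a \<in> ivl x1 \<and> b \<in> ivl x2}" unfolding ivl_def by auto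
next
  fix y assume "y \<in> {a+b|a b. a \<in> ivl x1 \<and> b \<in> ivl x2}"
  then obtain a b where "y = a + b" "lmod a \<le> x1" "lmod b \<le> x2" unfolding ivl_def by auto
  then have "lmod y \<le> x1 + x2"
    using order_trans[OF lmod_triangle[of a b] add_mono] by simp
  then show "y \<in> ivl (x1 + x2)" unfolding ivl_def by simp
qed

lemma ivl_scale: "0 < c \<Longrightarrow> ivl (c *\<^sub>R x) = scaleR c ` ivl x"
proof (intro equalityI subsetI)
  fix y assume c: "0 < c" and "y \<in> ivl (c *\<^sub>R x)"
  then have y: "lmod y \<le> c *\<^sub>R x" unfolding ivl_def by auto
  have "lmod (inverse c *\<^sub>R y) = inverse c *\<^sub>R lmod y" using c by (simp add: lmod_scale)
  also have "\<dots> \<le> inverse c *\<^sub>R (c *\<^sub>R x)" using c y by (intro scaleR_left_mono) auto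
  also have "\<dots> = x" using c by simp
  finally have "inverse c *\<^sub>R y \<in> ivl x" unfolding ivl_def by simp
  moreover have "y = c *\<^sub>R (inverse c *\<^sub>R y)" using c by simp
  ultimately show "y \<in> scaleR c ` ivl x" by blast
next
  fix y assume c: "0 < c" and "y \<in> scaleR c ` ivl x"
  then obtain z where z: "y = c *\<^sub>R z" "lmod z \<le> x" unfolding ivl_def by auto
  have "lmod y = c *\<^sub>R lmod z" using c z by (simp add: lmod_scale)
  also have "\<dots> \<le> c *\<^sub>R x" using c z by (intro scaleR_left_mono) auto
  finally show "y \<in> ivl (c *\<^sub>R x)" unfolding ivl_def by simp
qed

lemma ivl_0: "ivl (0::'a::banach_lattice) = {0}"
proof -
  have "y = 0" if "lmod y \<le> (0::'a)" for y
  proof -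
    have "y \<le> 0" "-y \<le> 0" using that unfolding lmod_le_iff by auto
    then show ?thesis by (metis antisym neg_le_0_iff_le)
  qed
  then show ?thesis unfolding ivl_def by auto
qed

lemma mp_zero: "mp f 0 = 0"
  unfolding mp_def ivl_0 by simp

lemma mp_add:
  assumes x: "0 \<le> x1" "0 \<le> x2" shows "mp f (x1 + x2) = mp f x1 + mp f x2"
  unfolding mp_def ivl_add[OF x]
  by (rule sup_add_gen[OF blinfun.add_right ivl_ne[OF x(1)] ivl_ne[OF x(2)] ivl_bdd[OF x(1)] ivl_bdd[OF x(2)]])

lemma mp_hom: "0 \<le> x \<Longrightarrow> 0 \<le> c \<Longrightarrow> mp f (c *\<^sub>R x) = c * mp f x"
proof (cases "c = 0")
  case True then show ?thesis by (simp add: mp_zero)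
next
  case False
  assume "0 \<le> x" "0 \<le> c"
  then have c: "0 < c" using False by simp
  show ?thesis unfolding mp_def ivl_scale[OF c]
    by (rule sup_scale_gen[OF _ c ivl_ne[OF \<open>0 \<le> x\<close>] ivl_bdd[OF \<open>0 \<le> x\<close>]])
      (simp add: blinfun.scaleR_right)
qed

lemma dual_abs_eq: "dual_abs f v = mp f (sup v 0) - mp f (sup v 0 - v)"
proof -
  have "dual_abs_pos f (sup v 0) = mp f (sup v 0)" by (rule dual_abs_pos_eq) simp
  moreover have "dual_abs_pos f (sup (-v) 0) = mp f (sup (-v) 0)" by (rule dual_abs_pos_eq) simp
  ultimately show ?thesis unfolding dual_abs_def pp_minus by simp
qed

lemma dual_abs_linear: "linear (dual_abs f)"
proof -
  have "linear (\<lambda>v. mp f (sup v 0) - mp f (sup v 0 - v))"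
    by (rule ext_linear[where C="{x. 0 \<le> x}"])
      (auto simp: mp_add mp_hom pp_minus intro: add_nonneg_nonneg scaleR_nonneg_nonneg)
  then show ?thesis by (simp add: dual_abs_eq[abs_def])
qed

lemma dual_abs_bound: "\<bar>dual_abs f x\<bar> \<le> norm x * (2 * norm f)"
proof -
  have n1: "norm (sup x 0) \<le> norm x"
    by (rule norm_le_lmod) (simp add: lmod_pos lmod_nonneg, simp add: lmod_def)
  have n2: "norm (sup (-x) 0) \<le> norm x"
    by (rule norm_le_lmod) (simp add: lmod_pos lmod_nonneg, simp add: lmod_def)
  have a: "0 \<le> mp f (sup x 0)" "mp f (sup x 0) \<le> norm f * norm (sup x 0)"
    by (auto intro: mp_nonneg mp_le_norm)
  have b: "0 \<le> mp f (sup (-x) 0)" "mp f (sup (-x) 0) \<le> norm f * norm (sup (-x) 0)"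
    by (auto intro: mp_nonneg mp_le_norm)
  have "norm f * norm (sup x 0) \<le> norm f * norm x" "norm f * norm (sup (-x) 0) \<le> norm f * norm x"
    using n1 n2 by (auto intro: mult_left_mono)
  moreover have e: "dual_abs f x = mp f (sup x 0) - mp f (sup (-x) 0)"
    unfolding dual_abs_def by (simp add: dual_abs_pos_eq)
  ultimately have "\<bar>dual_abs f x\<bar> \<le> 2 * (norm f * norm x)"
    unfolding abs_le_iff using a b by linarith
  then show ?thesis by (simp add: mult.commute mult.left_commute)
qed

lemma dual_abs_bl: "bounded_linear (dual_abs f)"
  using dual_abs_linear[of f] dual_abs_bound[of f]
  by (intro bounded_linear_intro[where K="2 * norm f"]) (auto simp: linear_add linear_scale)

definition absL :: "('a::banach_lattice \<Rightarrow>\<^sub>L real) \<Rightarrow> ('a \<Rightarrow>\<^sub>L real)" where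
  "absL f = Blinfun (dual_abs f)"

lemma absL_apply: "blinfun_apply (absL f) x = dual_abs f x"
  unfolding absL_def by (simp add: bounded_linear_Blinfun_apply[OF dual_abs_bl])

lemma absL_pos_eq: "0 \<le> x \<Longrightarrow> blinfun_apply (absL f) x = mp f x"
  unfolding absL_apply dual_abs_eq by (simp add: sup_absorb1 mp_zero)

lemma absL_nonneg: "0 \<le> x \<Longrightarrow> 0 \<le> blinfun_apply (absL f) x"
  by (simp add: absL_pos_eq mp_nonneg)

lemma absL_ge: "y \<in> ivl x \<Longrightarrow> 0 \<le> x \<Longrightarrow> blinfun_apply f y \<le> blinfun_apply (absL f) x"
  using absL_pos_eq[of x f] mp_ge[of y x f] by simp

lemma absL_least: "0 \<le> x \<Longrightarrow> (\<And>y. y \<in> ivl x \<Longrightarrow> blinfun_apply f y \<le> B) \<Longrightarrow> blinfun_apply (absL f) x \<le> B"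
  using absL_pos_eq[of x f] mp_least[of x f B] by simp

lemma norm_absL: "norm (absL f) \<le> 2 * norm f"
  by (rule norm_blinfun_bound) (auto simp: absL_apply intro: order_trans[OF dual_abs_bound] simp: mult.commute)

definition posf :: "('a::banach_lattice \<Rightarrow>\<^sub>L real) \<Rightarrow> bool" where
  "posf g \<longleftrightarrow> (\<forall>x. 0 \<le> x \<longrightarrow> 0 \<le> blinfun_apply g x)"

lemma posf_mono:
  assumes "posf g" "y \<le> x" shows "blinfun_apply g y \<le> blinfun_apply g x"
proof -
  have "0 \<le> blinfun_apply g (x - y)" using assms unfolding posf_def by simp
  then show ?thesis by (simp add: blinfun.diff_right)
qed

lemma posf_abs:
  assumes g: "posf g" and y: "y \<in> ivl x" shows "\<bar>blinfun_apply g y\<bar> \<le> blinfun_apply g x"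
proof -
  have "blinfun_apply g y \<le> blinfun_apply g x" using posf_mono[OF g ivl_le(1)[OF y]] .
  moreover have "blinfun_apply g (-y) \<le> blinfun_apply g x" using posf_mono[OF g ivl_le(2)[OF y]] .
  ultimately show ?thesis by (simp add: blinfun.minus_right abs_le_iff)
qed

lemma dual_abs_posf: "posf g \<Longrightarrow> dual_abs g x = blinfun_apply g x"
proof -
  assume g: "posf g"
  have m: "mp g z = blinfun_apply g z" if "0 \<le> z" for z
  proof (rule antisym)
    show "mp g z \<le> blinfun_apply g z"
      using that by (rule mp_least) (auto intro: posf_mono[OF g] ivl_le)
    show "blinfun_apply g z \<le> mp g z" using that by (intro mp_ge ivl_self)
  qed
  have "dual_abs g x = blinfun_apply g (sup x 0) - blinfun_apply g (sup (-x) 0)"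
    unfolding dual_abs_def by (simp add: dual_abs_pos_eq m)
  also have "\<dots> = blinfun_apply g (sup x 0 - sup (-x) 0)" by (simp only: blinfun.diff_right)
  also have "\<dots> = blinfun_apply g x" by (simp only: xpn[symmetric])
  finally show ?thesis .
qed

lemma posf_absL: "posf (absL f)"
  unfolding posf_def by (simp add: absL_nonneg)

lemma dual_abs_absL: "dual_abs (absL f) = dual_abs f"
  by (rule ext) (simp add: dual_abs_posf[OF posf_absL] absL_apply)



lemma posf_add: "posf a \<Longrightarrow> posf b \<Longrightarrow> posf (a + b)"
  unfolding posf_def by (simp add: blinfun.add_left)

lemma posf_scale: "posf a \<Longrightarrow> 0 \<le> c \<Longrightarrow> posf (c *\<^sub>R a)"
  unfolding posf_def by (simp add: blinfun.scaleR_left)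

lemma posf_zero: "posf 0"
  unfolding posf_def by simp

lemma posf_absL_minus: fixes k :: "'a::banach_lattice \<Rightarrow>\<^sub>L real" shows "posf (absL k - k)"
  unfolding posf_def
proof (intro allI impI)
  fix x :: 'a assume x: "0 \<le> x"
  show "0 \<le> blinfun_apply (absL k - k) x"
    using absL_ge[OF ivl_self[OF x] x, of k] by (simp add: blinfun.diff_left)
qed

lemma posf_eq0: assumes "posf k" "posf (-k)" shows "k = 0"
proof (rule blinfun_eqI)
  fix x
  have z: "blinfun_apply k z = 0" if "0 \<le> z" for z
    using assms that unfolding posf_def by (simp add: blinfun.minus_left) (meson antisym neg_0_le_iff_le)
  have "blinfun_apply k x = blinfun_apply k (sup x 0 - sup (-x) 0)" by (simp only: xpn[symmetric])
  also have "\<dots> = 0"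
  proof -
    have "0 \<le> sup x 0" "0 \<le> sup (-x) 0" by simp_all
    then show ?thesis by (simp only: blinfun.diff_right z)
  qed
  finally show "blinfun_apply k x = blinfun_apply 0 x" by simp
qed

lemma norm_posf_le: fixes k h :: "'a::banach_lattice \<Rightarrow>\<^sub>L real"
  assumes "posf k" "posf (h - k)" shows "norm k \<le> norm h"
proof (rule norm_blinfun_bound)
  show "0 \<le> norm h" by simp
  fix x :: 'a
  have l: "0 \<le> lmod x" by (rule lmod_nonneg)
  have "norm (blinfun_apply k x) \<le> blinfun_apply k (lmod x)"
    using posf_abs[OF assms(1), of x "lmod x"] by (simp add: ivl_def)
  also have "\<dots> \<le> blinfun_apply h (lmod x)"
    using assms(2) l unfolding posf_def by (simp add: blinfun.diff_left)
  also have "\<dots> \<le> norm (blinfun_apply h (lmod x))" by simp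
  also have "\<dots> \<le> norm h * norm (lmod x)" by (rule norm_blinfun)
  finally show "norm (blinfun_apply k x) \<le> norm h * norm x" by (simp add: norm_lmod)
qed

definition J :: "('a::banach_lattice \<Rightarrow>\<^sub>L real) \<Rightarrow> ('a \<Rightarrow>\<^sub>L real) set" where
  "J h = {k. posf k \<and> posf (h - k)}"

definition mm :: "(('a::banach_lattice \<Rightarrow>\<^sub>L real) \<Rightarrow>\<^sub>L real) \<Rightarrow> ('a \<Rightarrow>\<^sub>L real) \<Rightarrow> real" where
  "mm \<Phi> h = Sup (blinfun_apply \<Phi> ` J h)"

lemma J_zero_mem: "posf h \<Longrightarrow> 0 \<in> J h"
  unfolding J_def by (simp add: posf_zero)

lemma J_self: "posf h \<Longrightarrow> h \<in> J h"
  unfolding J_def by (simp add: posf_zero)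

lemma J_ne: "posf h \<Longrightarrow> J h \<noteq> {}"
  using J_zero_mem by auto

lemma Phi_le_norm: "k \<in> J h \<Longrightarrow> blinfun_apply \<Phi> k \<le> norm \<Phi> * norm h"
proof -
  assume k: "k \<in> J h"
  have "blinfun_apply \<Phi> k \<le> norm (blinfun_apply \<Phi> k)" by simp
  also have "\<dots> \<le> norm \<Phi> * norm k" by (rule norm_blinfun)
  also have "\<dots> \<le> norm \<Phi> * norm h"
    using norm_posf_le[of k h] k unfolding J_def by (intro mult_left_mono) auto
  finally show ?thesis .
qed

lemma J_bdd: fixes \<Phi> :: "('a::banach_lattice \<Rightarrow>\<^sub>L real) \<Rightarrow>\<^sub>L real"
  shows "bdd_above (blinfun_apply \<Phi> ` J h)"
proof (rule bdd_aboveI2)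
  fix k assume "k \<in> J h"
  then show "blinfun_apply \<Phi> k \<le> norm \<Phi> * norm h" by (rule Phi_le_norm)
qed

lemma mm_ge: "k \<in> J h \<Longrightarrow> blinfun_apply \<Phi> k \<le> mm \<Phi> h"
  unfolding mm_def by (rule cSup_upper) (auto intro: J_bdd)

lemma mm_least:
  assumes h: "posf h" and H: "\<And>k. k \<in> J h \<Longrightarrow> blinfun_apply \<Phi> k \<le> B"
  shows "mm \<Phi> h \<le> B"
  unfolding mm_def
proof (rule cSup_least)
  show "blinfun_apply \<Phi> ` J h \<noteq> {}" using J_ne[OF h] by simp
  fix t assume "t \<in> blinfun_apply \<Phi> ` J h"
  then show "t \<le> B" using H by blast
qed

lemma mm_nonneg: "posf h \<Longrightarrow> 0 \<le> mm \<Phi> h"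
  using mm_ge[OF J_zero_mem, of h \<Phi>] by simp

lemma mm_le_norm: "posf h \<Longrightarrow> mm \<Phi> h \<le> norm \<Phi> * norm h"
  by (rule mm_least) (auto intro: Phi_le_norm)

lemma J_add:
  assumes h1: "posf h1" and h2: "posf h2"
  shows "J (h1 + h2) = {a+b|a b. a \<in> J h1 \<and> b \<in> J h2}"
proof (intro equalityI subsetI)
  fix k assume "k \<in> J (h1 + h2)"
  then have k: "posf k" and s: "posf (h1 + h2 - k)" unfolding J_def by auto
  define a where "a = absL (k - h1)"
  define k1 where "k1 = (1/2) *\<^sub>R (k + h1 - a)"
  have i: "blinfun_apply a x \<le> blinfun_apply k x + blinfun_apply h1 x" if x: "0 \<le> x" for x
    unfolding a_def
  proof (rule absL_least[OF x])
    fix y assume y: "y \<in> ivl x"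
    have "\<bar>blinfun_apply k y\<bar> \<le> blinfun_apply k x" by (rule posf_abs[OF k y])
    moreover have "\<bar>blinfun_apply h1 y\<bar> \<le> blinfun_apply h1 x" by (rule posf_abs[OF h1 y])
    ultimately show "blinfun_apply (k - h1) y \<le> blinfun_apply k x + blinfun_apply h1 x"
      by (simp add: blinfun.diff_left abs_le_iff)
  qed
  have ii: "blinfun_apply k x - blinfun_apply h1 x \<le> blinfun_apply a x" if x: "0 \<le> x" for x
    unfolding a_def using absL_ge[OF ivl_self[OF x] x, of "k - h1"] by (simp add: blinfun.diff_left)
  have iv: "blinfun_apply h1 x - blinfun_apply k x \<le> blinfun_apply a x" if x: "0 \<le> x" for x
    unfolding a_def using absL_ge[OF ivl_minus[OF ivl_self[OF x]] x, of "k - h1"]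
    by (simp add: blinfun.diff_left blinfun.minus_right)
  have iii: "blinfun_apply a x \<le> 2 * blinfun_apply h2 x - blinfun_apply k x + blinfun_apply h1 x"
    if x: "0 \<le> x" for x
    unfolding a_def
  proof (rule absL_least[OF x])
    fix y assume y: "y \<in> ivl x"
    have "\<bar>blinfun_apply h2 y\<bar> \<le> blinfun_apply h2 x" by (rule posf_abs[OF h2 y])
    moreover have "\<bar>blinfun_apply (h1 + h2 - k) y\<bar> \<le> blinfun_apply (h1 + h2 - k) x"
      by (rule posf_abs[OF s y])
    ultimately show "blinfun_apply (k - h1) y \<le> 2 * blinfun_apply h2 x - blinfun_apply k x + blinfun_apply h1 x"
      by (simp add: blinfun.diff_left blinfun.add_left abs_le_iff)
  qed
  have "posf k1" unfolding posf_def k1_def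
  proof (intro allI impI)
    fix x :: 'a assume x: "0 \<le> x"
    show "0 \<le> blinfun_apply ((1/2) *\<^sub>R (k + h1 - a)) x"
      using i[OF x] by (simp add: blinfun.diff_left blinfun.add_left blinfun.scaleR_left)
  qed
  moreover have "posf (h1 - k1)" unfolding posf_def k1_def
  proof (intro allI impI)
    fix x :: 'a assume x: "0 \<le> x"
    show "0 \<le> blinfun_apply (h1 - (1/2) *\<^sub>R (k + h1 - a)) x"
      using ii[OF x] by (simp add: blinfun.diff_left blinfun.add_left blinfun.scaleR_left)
  qed
  moreover have "posf (k - k1)" unfolding posf_def k1_def
  proof (intro allI impI)
    fix x :: 'a assume x: "0 \<le> x"
    show "0 \<le> blinfun_apply (k - (1/2) *\<^sub>R (k + h1 - a)) x"
      using iv[OF x] by (simp add: blinfun.diff_left blinfun.add_left blinfun.scaleR_left)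
  qed
  moreover have "posf (h2 - (k - k1))" unfolding posf_def k1_def
  proof (intro allI impI)
    fix x :: 'a assume x: "0 \<le> x"
    show "0 \<le> blinfun_apply (h2 - (k - (1/2) *\<^sub>R (k + h1 - a))) x"
    proof -
      have "blinfun_apply a x \<le> 2 * blinfun_apply h2 x - blinfun_apply k x + blinfun_apply h1 x"
        using iii[OF x] .
      then have "blinfun_apply k x - (blinfun_apply k x + blinfun_apply h1 x - blinfun_apply a x) / 2
          \<le> blinfun_apply h2 x" by (simp add: field_simps)
      then show ?thesis by (simp add: blinfun.diff_left blinfun.add_left blinfun.scaleR_left)
    qed
  qed
  ultimately have "k1 \<in> J h1" "k - k1 \<in> J h2" unfolding J_def by auto
  moreover have "k = k1 + (k - k1)" by simp
  ultimately show "k \<in> {a+b|a b. a \<in> J h1 \<and> b \<in> J h2}" by blast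
next
  fix k assume "k \<in> {a+b|a b. a \<in> J h1 \<and> b \<in> J h2}"
  then obtain a b where ab: "k = a + b" "a \<in> J h1" "b \<in> J h2" by blast
  then have "posf (h1 - a + (h2 - b))" unfolding J_def by (auto intro: posf_add)
  moreover have "h1 - a + (h2 - b) = h1 + h2 - k" using ab by (simp add: algebra_simps)
  ultimately show "k \<in> J (h1 + h2)" using ab unfolding J_def by (auto intro: posf_add)
qed

lemma J_scale:
  assumes c: "0 < c" shows "J (c *\<^sub>R h) = scaleR c ` J h"
proof (intro equalityI subsetI)
  fix k assume "k \<in> J (c *\<^sub>R h)"
  then have k: "posf k" "posf (c *\<^sub>R h - k)" unfolding J_def by auto
  have "posf (inverse c *\<^sub>R k)" using posf_scale[OF k(1), of "inverse c"] c by simp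
  moreover have "posf (inverse c *\<^sub>R (c *\<^sub>R h - k))" using posf_scale[OF k(2), of "inverse c"] c by simp
  moreover have "inverse c *\<^sub>R (c *\<^sub>R h - k) = h - inverse c *\<^sub>R k" using c
    by (simp add: algebra_simps)
  ultimately have "inverse c *\<^sub>R k \<in> J h" unfolding J_def by simp
  moreover have "k = c *\<^sub>R (inverse c *\<^sub>R k)" using c by simp
  ultimately show "k \<in> scaleR c ` J h" by blast
next
  fix k assume "k \<in> scaleR c ` J h"
  then obtain z where z: "k = c *\<^sub>R z" "posf z" "posf (h - z)" unfolding J_def by auto
  have "posf (c *\<^sub>R (h - z))" using posf_scale[OF z(3)] c by simp
  moreover have "c *\<^sub>R (h - z) = c *\<^sub>R h - k" using z by (simp add: algebra_simps)
  ultimately show "k \<in> J (c *\<^sub>R h)" unfolding J_def using posf_scale[OF z(2)] c z by simp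
qed

lemma J_0: "J (0::'a::banach_lattice \<Rightarrow>\<^sub>L real) = {0}"
  unfolding J_def using posf_eq0 posf_zero by auto

lemma mm_zero: "mm \<Phi> 0 = 0"
  unfolding mm_def J_0 by simp

lemma mm_add:
  assumes h: "posf h1" "posf h2" shows "mm \<Phi> (h1 + h2) = mm \<Phi> h1 + mm \<Phi> h2"
  unfolding mm_def J_add[OF h]
  by (rule sup_add_gen[OF blinfun.add_right J_ne[OF h(1)] J_ne[OF h(2)] J_bdd J_bdd])

lemma mm_hom: "posf h \<Longrightarrow> 0 \<le> c \<Longrightarrow> mm \<Phi> (c *\<^sub>R h) = c * mm \<Phi> h"
proof (cases "c = 0")
  case True then show ?thesis by (simp add: mm_zero)
next
  case False
  assume h: "posf h" and "0 \<le> c"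
  then have c: "0 < c" using False by simp
  show ?thesis unfolding mm_def J_scale[OF c]
    by (rule sup_scale_gen[OF _ c J_ne[OF h] J_bdd]) (simp add: blinfun.scaleR_right)
qed

lemma mm_linear: "linear (\<lambda>k. mm \<Phi> (absL k) - mm \<Phi> (absL k - k))"
  by (rule ext_linear[where C="{k. posf k}"])
    (auto simp: mm_add mm_hom posf_absL posf_absL_minus intro: posf_add posf_scale)

lemma mm_bound: "\<bar>mm \<Phi> (absL k) - mm \<Phi> (absL k - k)\<bar> \<le> norm k * (5 * norm \<Phi>)"
proof -
  have a: "0 \<le> mm \<Phi> (absL k)" "mm \<Phi> (absL k) \<le> norm \<Phi> * norm (absL k)"
    using posf_absL by (auto intro: mm_nonneg mm_le_norm)
  have b: "0 \<le> mm \<Phi> (absL k - k)" "mm \<Phi> (absL k - k) \<le> norm \<Phi> * norm (absL k - k)"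
    using posf_absL_minus by (auto intro: mm_nonneg mm_le_norm)
  have n1: "norm (absL k) \<le> 2 * norm k" by (rule norm_absL)
  have n2: "norm (absL k - k) \<le> 3 * norm k"
    using norm_triangle_ineq4[of "absL k" k] n1 by simp
  have "norm \<Phi> * norm (absL k) \<le> norm \<Phi> * (2 * norm k)"
    using n1 by (intro mult_left_mono) auto
  moreover have "norm \<Phi> * norm (absL k - k) \<le> norm \<Phi> * (3 * norm k)"
    using n2 by (intro mult_left_mono) auto
  ultimately have "\<bar>mm \<Phi> (absL k) - mm \<Phi> (absL k - k)\<bar> \<le> 5 * (norm \<Phi> * norm k)"
    unfolding abs_le_iff using a b by (simp add: algebra_simps)
  then show ?thesis by (simp add: algebra_simps)
qed

lemma mm_bl: "bounded_linear (\<lambda>k. mm \<Phi> (absL k) - mm \<Phi> (absL k - k))"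
proof (rule bounded_linear_intro[where K="5 * norm \<Phi>"])
  fix x y
  show "mm \<Phi> (absL (x + y)) - mm \<Phi> (absL (x + y) - (x + y)) =
     mm \<Phi> (absL x) - mm \<Phi> (absL x - x) + (mm \<Phi> (absL y) - mm \<Phi> (absL y - y))"
    using linear_add[OF mm_linear[of \<Phi>], of x y] by simp
next
  fix r :: real and x
  show "mm \<Phi> (absL (r *\<^sub>R x)) - mm \<Phi> (absL (r *\<^sub>R x) - r *\<^sub>R x) =
     r *\<^sub>R (mm \<Phi> (absL x) - mm \<Phi> (absL x - x))"
    using linear_scale[OF mm_linear[of \<Phi>], of r x] by simp
next
  fix x
  show "norm (mm \<Phi> (absL x) - mm \<Phi> (absL x - x)) \<le> norm x * (5 * norm \<Phi>)"
    using mm_bound[of \<Phi> x] by simp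
qed

definition PL :: "(('a::banach_lattice \<Rightarrow>\<^sub>L real) \<Rightarrow>\<^sub>L real) \<Rightarrow> (('a \<Rightarrow>\<^sub>L real) \<Rightarrow>\<^sub>L real)" where
  "PL \<Phi> = Blinfun (\<lambda>k. mm \<Phi> (absL k) - mm \<Phi> (absL k - k))"

lemma PL_pos: assumes h: "posf h" shows "blinfun_apply (PL \<Phi>) h = mm \<Phi> h"
proof -
  have "blinfun_apply (PL \<Phi>) h = mm \<Phi> (absL h) - mm \<Phi> (absL h - h)"
    unfolding PL_def by (simp add: bounded_linear_Blinfun_apply[OF mm_bl])
  also have "\<dots> = mm \<Phi> h - mm \<Phi> 0"
    by (rule ext_welldef[where C="{k. posf k}"])
      (auto simp: mm_add posf_absL posf_absL_minus h posf_zero intro: posf_add)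
  finally show ?thesis by (simp add: mm_zero)
qed

lemma mm_mono: "posf c \<Longrightarrow> posf (b - c) \<Longrightarrow> mm \<Phi> b = mm \<Phi> c + mm \<Phi> (b - c)"
  using mm_add[of c "b - c" \<Phi>] by simp

lemma weakly_null_dom:
  fixes b c :: "nat \<Rightarrow> ('a::banach_lattice \<Rightarrow>\<^sub>L real)"
  assumes c: "\<And>n. posf (c n)" and bc: "\<And>n. posf (b n - c n)" and b: "weakly_null b"
  shows "weakly_null c"
  unfolding weakly_null_def
proof
  fix \<Phi> :: "('a \<Rightarrow>\<^sub>L real) \<Rightarrow>\<^sub>L real"
  have bpos: "posf (b n)" for n using posf_add[OF c[of n] bc[of n]] by simp
  have Pb0: "(\<lambda>n. blinfun_apply (PL \<Phi>) (b n)) \<longlonglongrightarrow> 0"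
    using b unfolding weakly_null_def by blast
  have "(\<lambda>n. blinfun_apply (PL \<Phi>) (b n)) = (\<lambda>n. mm \<Phi> (b n))"
    by (simp add: PL_pos bpos)
  then have Pb: "(\<lambda>n. mm \<Phi> (b n)) \<longlonglongrightarrow> 0" using Pb0 by simp
  have Phib: "(\<lambda>n. blinfun_apply \<Phi> (b n)) \<longlonglongrightarrow> 0" using b unfolding weakly_null_def by blast
  have Pc: "(\<lambda>n. mm \<Phi> (c n)) \<longlonglongrightarrow> 0"
  proof (rule tendsto_sandwich[OF _ _ tendsto_const Pb])
    show "\<forall>\<^sub>F n in sequentially. 0 \<le> mm \<Phi> (c n)"
      by (rule always_eventually) (simp add: mm_nonneg c)
    have "mm \<Phi> (c n) \<le> mm \<Phi> (b n)" for n
      using mm_mono[OF c[of n] bc[of n], of \<Phi>] mm_nonneg[OF bc[of n], of \<Phi>] by simp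
    then show "\<forall>\<^sub>F n in sequentially. mm \<Phi> (c n) \<le> mm \<Phi> (b n)"
      by (intro always_eventually allI)
  qed
  have Qc: "(\<lambda>n. mm \<Phi> (c n) - blinfun_apply \<Phi> (c n)) \<longlonglongrightarrow> 0"
  proof (rule tendsto_sandwich[OF _ _ tendsto_const])
    show "(\<lambda>n. mm \<Phi> (b n) - blinfun_apply \<Phi> (b n)) \<longlonglongrightarrow> 0"
      using tendsto_diff[OF Pb Phib] by simp
    show "\<forall>\<^sub>F n in sequentially. 0 \<le> mm \<Phi> (c n) - blinfun_apply \<Phi> (c n)"
      using mm_ge[OF J_self[OF c]] by (intro always_eventually allI) (simp add: c)
    have "mm \<Phi> (c n) - blinfun_apply \<Phi> (c n) \<le> mm \<Phi> (b n) - blinfun_apply \<Phi> (b n)" for n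
    proof -
      have "blinfun_apply \<Phi> (b n - c n) \<le> mm \<Phi> (b n - c n)" by (rule mm_ge[OF J_self[OF bc]])
      then show ?thesis using mm_mono[OF c[of n] bc[of n], of \<Phi>] by (simp add: blinfun.diff_right)
    qed
    then show "\<forall>\<^sub>F n in sequentially. mm \<Phi> (c n) - blinfun_apply \<Phi> (c n) \<le> mm \<Phi> (b n) - blinfun_apply \<Phi> (b n)"
      by (intro always_eventually allI)
  qed
  show "(\<lambda>n. blinfun_apply \<Phi> (c n)) \<longlonglongrightarrow> 0"
    using tendsto_diff[OF Pc Qc] by simp
qed



lemma weakly_null_scale: "weakly_null b \<Longrightarrow> weakly_null (\<lambda>n. r *\<^sub>R b n)"
  unfolding weakly_null_def
  by (auto simp: blinfun.scaleR_right intro: tendsto_mult_right_zero)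

theorem mainTheorem13:
  fixes S T :: "'a::banach_lattice \<Rightarrow>\<^sub>L 'b::banach_lattice"
  assumes "property_d TYPE('b)"
    and "positive_op S"
    and "positive_op (T - S)"
    and "almost_grothendieck T"
  shows "almost_grothendieck S"
  unfolding almost_grothendieck_def
proof (intro allI impI)
  fix y :: "nat \<Rightarrow> ('b \<Rightarrow>\<^sub>L real)"
  assume yy: "disjoint_seq y \<and> weak_star_null y"
  define g where "g n = absL (y n)" for n
  have gd: "disjoint_seq g"
    using yy unfolding disjoint_seq_def dual_disjoint_def g_def by (simp add: dual_abs_absL)
  have gw: "weak_star_null g"
    using yy assms(1) unfolding property_d_def weak_star_null_def g_def by (simp add: absL_apply)
  have bT: "weakly_null (\<lambda>n. g n o\<^sub>L T)"
    using assms(4) gd gw unfolding almost_grothendieck_def by blast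
  define b where "b n = 2 *\<^sub>R (g n o\<^sub>L T)" for n
  have bw: "weakly_null b" unfolding b_def by (rule weakly_null_scale[OF bT])
  have Spos: "0 \<le> blinfun_apply S x" if "0 \<le> x" for x
    using assms(2) that unfolding positive_op_def by blast
  have ST: "blinfun_apply S x \<le> blinfun_apply T x" if "0 \<le> x" for x
    using assms(3) that unfolding positive_op_def by (simp add: blinfun.diff_left)
  have gy: "blinfun_apply (y n) z \<le> blinfun_apply (g n) z" "- blinfun_apply (y n) z \<le> blinfun_apply (g n) z"
    if "0 \<le> z" for n z
    using absL_ge[OF ivl_self[OF that] that, of "y n"] absL_ge[OF ivl_minus[OF ivl_self[OF that]] that, of "y n"]
    unfolding g_def by (auto simp: blinfun.minus_right)
  have gmono: "blinfun_apply (g n) (blinfun_apply S x) \<le> blinfun_apply (g n) (blinfun_apply T x)"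
    if "0 \<le> x" for n x
    unfolding g_def by (rule posf_mono[OF posf_absL ST[OF that]])
  define c1 where "c1 n = (g n + y n) o\<^sub>L S" for n
  define c2 where "c2 n = (g n - y n) o\<^sub>L S" for n
  have c1p: "posf (c1 n)" for n
    unfolding posf_def c1_def
  proof (intro allI impI)
    fix x :: 'a assume x: "0 \<le> x"
    show "0 \<le> blinfun_apply ((g n + y n) o\<^sub>L S) x"
      using gy(2)[OF Spos[OF x], of n] by (simp add: blinfun.add_left)
  qed
  have c2p: "posf (c2 n)" for n
    unfolding posf_def c2_def
  proof (intro allI impI)
    fix x :: 'a assume x: "0 \<le> x"
    show "0 \<le> blinfun_apply ((g n - y n) o\<^sub>L S) x"
      using gy(1)[OF Spos[OF x], of n] by (simp add: blinfun.diff_left)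
  qed
  have c1b: "posf (b n - c1 n)" for n
    unfolding posf_def c1_def b_def
  proof (intro allI impI)
    fix x :: 'a assume x: "0 \<le> x"
    show "0 \<le> blinfun_apply (2 *\<^sub>R (g n o\<^sub>L T) - ((g n + y n) o\<^sub>L S)) x"
      using gy[OF Spos[OF x], of n] gmono[OF x, of n]
      by (simp add: blinfun.add_left blinfun.diff_left blinfun.scaleR_left)
  qed
  have c2b: "posf (b n - c2 n)" for n
    unfolding posf_def c2_def b_def
  proof (intro allI impI)
    fix x :: 'a assume x: "0 \<le> x"
    show "0 \<le> blinfun_apply (2 *\<^sub>R (g n o\<^sub>L T) - ((g n - y n) o\<^sub>L S)) x"
      using gy[OF Spos[OF x], of n] gmono[OF x, of n]
      by (simp add: blinfun.add_left blinfun.diff_left blinfun.scaleR_left)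
  qed
  have w1: "weakly_null c1" by (rule weakly_null_dom[OF c1p c1b bw])
  have w2: "weakly_null c2" by (rule weakly_null_dom[OF c2p c2b bw])
  have eq: "y n o\<^sub>L S = (1/2) *\<^sub>R (c1 n - c2 n)" for n
    unfolding c1_def c2_def
    by (rule blinfun_eqI) (simp add: blinfun.add_left blinfun.diff_left blinfun.scaleR_left)
  show "weakly_null (\<lambda>n. y n o\<^sub>L S)"
    unfolding weakly_null_def
  proof
    fix \<Phi> :: "('a \<Rightarrow>\<^sub>L real) \<Rightarrow>\<^sub>L real"
    have "(\<lambda>n. (1/2) * (blinfun_apply \<Phi> (c1 n) - blinfun_apply \<Phi> (c2 n))) \<longlonglongrightarrow> (1/2) * (0 - 0)"
      using w1 w2 unfolding weakly_null_def by (intro tendsto_intros) auto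
    then show "(\<lambda>n. blinfun_apply \<Phi> (y n o\<^sub>L S)) \<longlonglongrightarrow> 0"
      by (simp add: eq blinfun.scaleR_right blinfun.diff_right)
  qed
qed

end
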